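(* Consider the one-stage ANC game described in the context with scalar control ($m=1$). Suppose that for every $x\in\mathbb{R}^n$ and $a\in\mathcal{A}$ the functions $u\mapsto\Sigma(F(x,u),u,a)$ and $u\mapsto\Sigma(F(x,0),u,a)$ are convex on $\mathbb{R}$ and continuously differentiable on $\mathbb{R}$ except possibly at finitely many points; let $U^d=U^d(x)$ be the set of such exceptional points. Let $\mathcal{G}=\{a_1,a_2\}\subset\mathcal{A}$ with $a_1\ne a_2$. (i) If for every $x,s$ there exists $\bar u\notin U^d$ such that $h^{x,s}_{a_1}(\bar u)=h^{x,s}_{a_2}(\bar u)$ and $h^{x,s}_i(\bar u)\ge h^{x,s}_a(\bar u)$ for all $i\in\mathcal{G}$, $a\notin\mathcal{G}$, and either $\frac{dh^{x,s}_{a_1}(\bar u)}{du}\cdot\frac{dh^{x,s}_{a_2}(\bar u)}{du}<0$ or $\frac{dh^{x,s}_{a_1}(\bar u)}{du}=\frac{dh^{x,s}_{a_2}(\bar u)}{du}=0$, then the game admits a non-pure saddle point $(u^*,p^* )$, $u^*\notin U^d$, with $p^*$ supported on $\mathcal{G}$. (ii) Conversely, if the game admits a non-pure saddle point $(u^*,p^* )$, $u^*\notin U^d$, with $p^*$ supported on $\mathcal{G}$, then there exists $\bar u\notin U^d$ such that $h^{x,s}_{a_1}(\bar u)=h^{x,s}_{a_2}(\bar u)$ and either $\frac{dh^{x,s}_{a_1}(\bar u)}{du}\cdot\frac{dh^{x,s}_{a_2}(\bar u)}{du}<0$ or $\frac{dh^{x,s}_{a_1}(\bar u)}{du}=\frac{dh^{x,s}_{a_2}(\bar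 u)}{du}=0$.
   Context: Setting (one-stage ANC game). Let $\mathcal{F}=\{1,\dots,|\mathcal{F}|\}$ be a finite set of transmission regimes and $\mathcal{A}=\{1,\dots,N\}$ a finite set of jammer actions. For each $a\in\mathcal{A}$ let $P(a)$ be an $|\mathcal{F}|\times|\mathcal{F}|$ row-stochastic matrix, and let $q\in[0,1]^{|\mathcal{F}|}$. Let $F:\mathbb{R}^n\times\mathbb{R}^m\to\mathbb{R}^n$, $\sigma^0:\mathbb{R}^n\times\mathbb{R}^m\to\mathbb{R}$, $\sigma^1:\mathbb{R}^n\to\mathbb{R}$, $g^0:\mathcal{A}\times\mathcal{F}\to\mathbb{R}$. For a plant state $x$ and regime $s$, the controller chooses $u\in\mathbb{R}^m$, the jammer chooses $p\in\mathcal{S}_{N-1}$ (unit simplex in $\mathbb{R}^N$); $a$ is drawn according to $p$, $s^+$ with $\mathrm{Pr}(s^+=i)=P_{si}(a)$, $b\in\{0,1\}$ with $\mathrm{Pr}(b=1\mid s^+)=q_{s^+}$, and $x^+=F(x,bu)$. Payoff $\Sigma(x^+,u,a)=\sigma^0(x,u)+\sigma^1(x^+)-g^0(a,s)$, with expectation $p'h^{x,s}(u)$ where $h^{x,s}_i(u)=(P(i)q)_s\Sigma(F(x,u),u,i)+(1-(P(i)q)_s)\Sigma(F(x,0),u,i)$, $(P(i)q)_s$ being the $s$-th entry of $P(i)q$. A saddle point is $(u^*,p^* )\in\mathbb{R}^m\times\mathcal{S}_{N-1}$ with $p'h^{x,s}(u^* )\le(p^* )'h^{x,s}(u^* )\le(p^*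 )'h^{x,s}(u)$ for all $u,p$. It is non-pure if $p^*$ has at least two positive components; "$p^*$ supported on $\mathcal{G}$" means $p^*_a=0$ for $a\notin\mathcal{G}$. *)

theory Defs
  imports "HOL-Analysis.Analysis"
begin

text \<open>One-stage ANC game. Jammer actions are 1..N, transmission regimes are 1..K.
  P a i j is the (i,j) entry of the row-stochastic matrix P(a); q j is the j-th entry of q.\<close>

text \<open>Payoff Sigma(x+,u,a) = sigma0(x,u) + sigma1(x+) - g0(a,s), for current state x and regime s.\<close>
definition Sig :: "('x \<Rightarrow> real \<Rightarrow> real) \<Rightarrow> ('x \<Rightarrow> real) \<Rightarrow> (nat \<Rightarrow> nat \<Rightarrow> real)
    \<Rightarrow> 'x \<Rightarrow> nat \<Rightarrow> 'x \<Rightarrow> real \<Rightarrow> nat \<Rightarrow> real" where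
  "Sig \<sigma>0 \<sigma>1 g0 x s xp u a = \<sigma>0 x u + \<sigma>1 xp - g0 a s"

definition Pq :: "nat \<Rightarrow> (nat \<Rightarrow> nat \<Rightarrow> nat \<Rightarrow> real) \<Rightarrow> (nat \<Rightarrow> real) \<Rightarrow> nat \<Rightarrow> nat \<Rightarrow> real" where
  "Pq K P q a s = (\<Sum>j\<in>{1..K}. P a s j * q j)"

definition hpay :: "nat \<Rightarrow> (nat \<Rightarrow> nat \<Rightarrow> nat \<Rightarrow> real) \<Rightarrow> (nat \<Rightarrow> real) \<Rightarrow> ('x \<Rightarrow> real \<Rightarrow> 'x)
    \<Rightarrow> ('x \<Rightarrow> real \<Rightarrow> real) \<Rightarrow> ('x \<Rightarrow> real) \<Rightarrow> (nat \<Rightarrow> nat \<Rightarrow> real)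
    \<Rightarrow> 'x \<Rightarrow> nat \<Rightarrow> nat \<Rightarrow> real \<Rightarrow> real" where
  "hpay K P q F \<sigma>0 \<sigma>1 g0 x s i u =
     Pq K P q i s * Sig \<sigma>0 \<sigma>1 g0 x s (F x u) u i
     + (1 - Pq K P q i s) * Sig \<sigma>0 \<sigma>1 g0 x s (F x 0) u i"

text \<open>Unit unit_simplex S_{N-1} (only the coordinates 1..N matter).\<close>
definition unit_simplex :: "nat \<Rightarrow> (nat \<Rightarrow> real) set" where
  "unit_simplex N = {p. (\<forall>a\<in>{1..N}. 0 \<le> p a) \<and> (\<Sum>a\<in>{1..N}. p a) = 1}"

definition payoff :: "nat \<Rightarrow> (nat \<Rightarrow> real \<Rightarrow> real) \<Rightarrow> (nat \<Rightarrow> real) \<Rightarrow> real \<Rightarrow> real" where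
  "payoff N h p u = (\<Sum>a\<in>{1..N}. p a * h a u)"

definition saddle_point :: "nat \<Rightarrow> (nat \<Rightarrow> real \<Rightarrow> real) \<Rightarrow> real \<Rightarrow> (nat \<Rightarrow> real) \<Rightarrow> bool" where
  "saddle_point N h us ps \<longleftrightarrow> ps \<in> unit_simplex N \<and>
     (\<forall>p\<in>unit_simplex N. payoff N h p us \<le> payoff N h ps us) \<and>
     (\<forall>u. payoff N h ps us \<le> payoff N h ps u)"

definition non_pure :: "nat \<Rightarrow> (nat \<Rightarrow> real) \<Rightarrow> bool" where
  "non_pure N p \<longleftrightarrow> card {a\<in>{1..N}. 0 < p a} \<ge> 2"

definition supported_on :: "nat \<Rightarrow> (nat \<Rightarrow> real) \<Rightarrow> nat set \<Rightarrow> bool" where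
  "supported_on N p G \<longleftrightarrow> (\<forall>a\<in>{1..N}. a \<notin> G \<longrightarrow> p a = 0)"

end

theory Submission
  imports Defs
begin

lemma convex_tangent:
  fixes f :: "real \<Rightarrow> real"
  assumes cv: "convex_on UNIV f" and d: "DERIV f u :> d"
  shows "f u + d * (v - u) \<le> f v"
proof -
  let ?g = "\<lambda>t. f (u + t*(v-u))"
  have d0: "DERIV f (u + 0*(v-u)) :> d" using d by simp
  have "((\<lambda>t. u + t*(v-u)) has_real_derivative (v-u)) (at 0)"
    by (auto intro!: derivative_eq_intros)
  from DERIV_chain2[OF d0 this] have "DERIV ?g 0 :> d*(v-u)" .
  then have lim: "((\<lambda>t. (?g t - ?g 0)/(t - 0)) \<longlongrightarrow> d*(v-u)) (at 0)"
    by (simp add: has_field_derivative_iff)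
  then have limr: "((\<lambda>t. (?g t - ?g 0)/(t - 0)) \<longlongrightarrow> d*(v-u)) (at_right 0)"
    using filterlim_at_split by blast
  have ev: "eventually (\<lambda>t. (?g t - ?g 0)/(t - 0) \<le> f v - f u) (at_right 0)"
  proof -
    have "eventually (\<lambda>t::real. t \<in> {0<..<1}) (at_right 0)"
      by (rule eventually_at_right_real) simp
    then show ?thesis
    proof eventually_elim
      case (elim t)
      then have "0 < t" "t < 1" by auto
      note elim = this
      have "f ((1 - t) *\<^sub>R u + t *\<^sub>R v) \<le> (1 - t) * f u + t * f v"
        using convex_onD[OF cv, of t u v] elim by auto
      moreover have "(1 - t) *\<^sub>R u + t *\<^sub>R v = u + t*(v-u)" by (simp add: algebra_simps)
      ultimately have "?g t - ?g 0 \<le> t * (f v - f u)" by (simp add: algebra_simps)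
      then show ?case using elim by (simp add: divide_simps mult.commute)
    qed
  qed
  have "d*(v-u) \<le> f v - f u"
    by (rule tendsto_upperbound[OF limr ev]) simp
  then show ?thesis by simp
qed

theorem theorem3:
  fixes N K :: nat
    and P :: "nat \<Rightarrow> nat \<Rightarrow> nat \<Rightarrow> real" and q :: "nat \<Rightarrow> real"
    and F :: "real ^ 'n \<Rightarrow> real \<Rightarrow> real ^ 'n"
    and \<sigma>0 :: "real ^ 'n \<Rightarrow> real \<Rightarrow> real" and \<sigma>1 :: "real ^ 'n \<Rightarrow> real"
    and g0 :: "nat \<Rightarrow> nat \<Rightarrow> real"
    and Ud :: "real ^ 'n \<Rightarrow> real set"
    and x :: "real ^ 'n" and s a1 a2 :: nat
  assumes P_nonneg: "\<forall>a\<in>{1..N}. \<forall>i\<in>{1..K}. \<forall>j\<in>{1..K}. 0 \<le> P a i j"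
    and P_rows: "\<forall>a\<in>{1..N}. \<forall>i\<in>{1..K}. (\<Sum>j\<in>{1..K}. P a i j) = 1"
    and q_range: "\<forall>j\<in>{1..K}. 0 \<le> q j \<and> q j \<le> 1"
    and s_in: "s \<in> {1..K}"
    and a1_in: "a1 \<in> {1..N}" and a2_in: "a2 \<in> {1..N}" and a12: "a1 \<noteq> a2"
    and convex1: "\<forall>y. \<forall>a\<in>{1..N}. convex_on UNIV (\<lambda>u. Sig \<sigma>0 \<sigma>1 g0 y s (F y u) u a)"
    and convex0: "\<forall>y. \<forall>a\<in>{1..N}. convex_on UNIV (\<lambda>u. Sig \<sigma>0 \<sigma>1 g0 y s (F y 0) u a)"
    and Ud_finite: "\<forall>y. finite (Ud y)"
    and C1_1: "\<forall>y. \<forall>a\<in>{1..N}. (\<lambda>u. Sig \<sigma>0 \<sigma>1 g0 y s (F y u) u a) C1_differentiable_on (- Ud y)"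
    and C1_0: "\<forall>y. \<forall>a\<in>{1..N}. (\<lambda>u. Sig \<sigma>0 \<sigma>1 g0 y s (F y 0) u a) C1_differentiable_on (- Ud y)"
  shows "((\<exists>ub. ub \<notin> Ud x
            \<and> hpay K P q F \<sigma>0 \<sigma>1 g0 x s a1 ub = hpay K P q F \<sigma>0 \<sigma>1 g0 x s a2 ub
            \<and> (\<forall>i\<in>{a1, a2}. \<forall>a\<in>{1..N} - {a1, a2}.
                 hpay K P q F \<sigma>0 \<sigma>1 g0 x s i ub \<ge> hpay K P q F \<sigma>0 \<sigma>1 g0 x s a ub)
            \<and> (deriv (hpay K P q F \<sigma>0 \<sigma>1 g0 x s a1) ub * deriv (hpay K P q F \<sigma>0 \<sigma>1 g0 x s a2) ub < 0
               \<or> (deriv (hpay K P q F \<sigma>0 \<sigma>1 g0 x s a1) ub = 0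
                  \<and> deriv (hpay K P q F \<sigma>0 \<sigma>1 g0 x s a2) ub = 0)))
          \<longrightarrow> (\<exists>us ps. us \<notin> Ud x \<and> saddle_point N (hpay K P q F \<sigma>0 \<sigma>1 g0 x s) us ps
                  \<and> non_pure N ps \<and> supported_on N ps {a1, a2}))
       \<and> ((\<exists>us ps. us \<notin> Ud x \<and> saddle_point N (hpay K P q F \<sigma>0 \<sigma>1 g0 x s) us ps
                  \<and> non_pure N ps \<and> supported_on N ps {a1, a2})
          \<longrightarrow> (\<exists>ub. ub \<notin> Ud x
            \<and> hpay K P q F \<sigma>0 \<sigma>1 g0 x s a1 ub = hpay K P q F \<sigma>0 \<sigma>1 g0 x s a2 ub
            \<and> (deriv (hpay K P q F \<sigma>0 \<sigma>1 g0 x s a1) ub * deriv (hpay K P q F \<sigma>0 \<sigma>1 g0 x s a2) ub < 0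
               \<or> (deriv (hpay K P q F \<sigma>0 \<sigma>1 g0 x s a1) ub = 0
                  \<and> deriv (hpay K P q F \<sigma>0 \<sigma>1 g0 x s a2) ub = 0))))"
proof -
  define h where "h = hpay K P q F \<sigma>0 \<sigma>1 g0 x s"
  define c where "c a = Pq K P q a s" for a
  define f1 where "f1 a u = Sig \<sigma>0 \<sigma>1 g0 x s (F x u) u a" for a u
  define f0 where "f0 a u = Sig \<sigma>0 \<sigma>1 g0 x s (F x 0) u a" for a u
  have hfun: "h a = (\<lambda>u. c a * f1 a u + (1 - c a) * f0 a u)" for a
    by (rule ext) (simp add: h_def hpay_def c_def f1_def f0_def)
  have c01: "0 \<le> c a \<and> c a \<le> 1" if a: "a \<in> {1..N}" for a
  proof -
    have "0 \<le> c a" unfolding c_def Pq_def using P_nonneg a s_in q_range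
      by (auto intro!: sum_nonneg)
    moreover have "c a \<le> (\<Sum>j\<in>{1..K}. P a s j)" unfolding c_def Pq_def
    proof (rule sum_mono)
      fix j assume j: "j \<in> {1..K}"
      then have "0 \<le> P a s j" "q j \<le> 1" using P_nonneg a s_in q_range by auto
      then show "P a s j * q j \<le> P a s j" by (simp add: mult_left_le)
    qed
    moreover have "(\<Sum>j\<in>{1..K}. P a s j) = 1" using P_rows a s_in by auto
    ultimately show ?thesis by simp
  qed
  have hconv: "convex_on UNIV (h a)" if a: "a \<in> {1..N}" for a
  proof -
    have "convex_on UNIV (\<lambda>u. c a * f1 a u + (1 - c a) * f0 a u)"
      using convex1 convex0 c01[OF a] a unfolding f1_def f0_def
      by (intro convex_on_add convex_on_cmul) auto
    then show ?thesis by (simp add: hfun)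
  qed
  have hder: "DERIV (h a) u :> deriv (h a) u" if a: "a \<in> {1..N}" and u: "u \<notin> Ud x" for a u
  proof -
    obtain D1 where D1: "\<forall>v\<in>- Ud x. (f1 a has_vector_derivative D1 v) (at v)"
      using C1_1 a unfolding C1_differentiable_on_def f1_def by blast
    obtain D0 where D0: "\<forall>v\<in>- Ud x. (f0 a has_vector_derivative D0 v) (at v)"
      using C1_0 a unfolding C1_differentiable_on_def f0_def by blast
    have "DERIV (f1 a) u :> D1 u" using D1 u by (simp add: has_real_derivative_iff_has_vector_derivative)
    moreover have "DERIV (f0 a) u :> D0 u" using D0 u by (simp add: has_real_derivative_iff_has_vector_derivative)
    ultimately have "DERIV (h a) u :> c a * D1 u + (1 - c a) * D0 u"
      unfolding hfun by (auto intro!: derivative_eq_intros)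
    then show ?thesis using DERIV_imp_deriv by metis
  qed
  have payG: "payoff N h p u = p a1 * h a1 u + p a2 * h a2 u" if sp: "supported_on N p {a1, a2}" for p u
  proof -
    have "payoff N h p u = (\<Sum>a\<in>{a1,a2}. p a * h a u)" unfolding payoff_def
      by (rule sum.mono_neutral_right) (use sp a1_in a2_in in \<open>auto simp: supported_on_def\<close>)
    also have "\<dots> = p a1 * h a1 u + p a2 * h a2 u" using a12 by simp
    finally show ?thesis .
  qed
  have sumG: "(\<Sum>a\<in>{1..N}. p a) = p a1 + p a2" if sp: "supported_on N p {a1, a2}" for p
  proof -
    have "(\<Sum>a\<in>{1..N}. p a) = (\<Sum>a\<in>{a1,a2}. p a)"
      by (rule sum.mono_neutral_right) (use sp a1_in a2_in in \<open>auto simp: supported_on_def\<close>)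
    also have "\<dots> = p a1 + p a2" using a12 by simp
    finally show ?thesis .
  qed
  show ?thesis
    unfolding h_def[symmetric]
  proof (intro conjI impI)
    assume "\<exists>ub. ub \<notin> Ud x \<and> h a1 ub = h a2 ub \<and>
        (\<forall>i\<in>{a1, a2}. \<forall>a\<in>{1..N} - {a1, a2}. h a ub \<le> h i ub) \<and>
        (deriv (h a1) ub * deriv (h a2) ub < 0 \<or> deriv (h a1) ub = 0 \<and> deriv (h a2) ub = 0)"
    then obtain ub where ub: "ub \<notin> Ud x" and heq: "h a1 ub = h a2 ub"
      and hge: "\<forall>i\<in>{a1, a2}. \<forall>a\<in>{1..N} - {a1, a2}. h a ub \<le> h i ub"
      and dd: "deriv (h a1) ub * deriv (h a2) ub < 0 \<or> deriv (h a1) ub = 0 \<and> deriv (h a2) ub = 0"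
      by blast
    define d1 where "d1 = deriv (h a1) ub"
    define d2 where "d2 = deriv (h a2) ub"
    define l where "l = (if d1 = d2 then 1/2 else d2 / (d2 - d1))"
    have l: "0 < l \<and> l < 1 \<and> l * d1 + (1 - l) * d2 = 0"
    proof (cases "d1 = d2")
      case True
      then have "d1 = 0" "d2 = 0" using dd unfolding d1_def[symmetric] d2_def[symmetric]
        by (auto simp: mult_less_0_iff)
      then show ?thesis using True by (simp add: l_def)
    next
      case False
      then have dd': "d1 * d2 < 0" using dd unfolding d1_def[symmetric] d2_def[symmetric] by auto
      show ?thesis
      proof (cases "d1 < 0")
        case True
        then have "d2 > 0" using dd' by (auto simp: mult_less_0_iff)
        then show ?thesis using True False unfolding l_def by (auto simp: field_simps)
      next
        case False
        then have "d1 > 0" "d2 < 0" using dd' by (auto simp: mult_less_0_iff)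
        then show ?thesis unfolding l_def by (auto simp: field_simps)
      qed
    qed
    define ps where "ps a = (if a = a1 then l else if a = a2 then 1 - l else 0)" for a
    have sp: "supported_on N ps {a1, a2}" by (simp add: supported_on_def ps_def)
    have ps1: "ps a1 = l" and ps2: "ps a2 = 1 - l" using a12 by (auto simp: ps_def)
    have simp_ps: "ps \<in> unit_simplex N"
      unfolding unit_simplex_def using sumG[OF sp] ps1 ps2 l by (auto simp: ps_def)
    have posset: "{a\<in>{1..N}. 0 < ps a} = {a1, a2}"
      using a1_in a2_in l a12 by (auto simp: ps_def split: if_splits)
    have np: "non_pure N ps" unfolding non_pure_def posset using a12 by simp
    have tang1: "h a1 ub + d1 * (v - ub) \<le> h a1 v" for v
      using convex_tangent[OF hconv[OF a1_in] hder[OF a1_in ub]] d1_def by simp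
    have tang2: "h a2 ub + d2 * (v - ub) \<le> h a2 v" for v
      using convex_tangent[OF hconv[OF a2_in] hder[OF a2_in ub]] d2_def by simp
    have minp: "payoff N h ps ub \<le> payoff N h ps v" for v
    proof -
      have A: "l * (h a1 ub + d1 * (v - ub)) \<le> l * h a1 v"
        using tang1[of v] l by (intro mult_left_mono) auto
      have B: "(1 - l) * (h a2 ub + d2 * (v - ub)) \<le> (1 - l) * h a2 v"
        using tang2[of v] l by (intro mult_left_mono) auto
      have C: "(l * d1 + (1 - l) * d2) * (v - ub) = 0" using l by simp
      have "l * h a1 ub + (1 - l) * h a2 ub \<le> l * h a1 v + (1 - l) * h a2 v"
        using A B C by (simp add: algebra_simps)
      then show ?thesis using payG[OF sp] ps1 ps2 by simp
    qed
    have maxp: "payoff N h p ub \<le> payoff N h ps ub" if p: "p \<in> unit_simplex N" for p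
    proof -
      have "payoff N h p ub \<le> (\<Sum>a\<in>{1..N}. p a * h a1 ub)" unfolding payoff_def
      proof (rule sum_mono)
        fix a assume a: "a \<in> {1..N}"
        have "h a ub \<le> h a1 ub" using hge a heq by (cases "a = a1 \<or> a = a2") auto
        moreover have "0 \<le> p a" using p a by (auto simp: unit_simplex_def)
        ultimately show "p a * h a ub \<le> p a * h a1 ub" by (simp add: mult_left_mono)
      qed
      also have "\<dots> = h a1 ub" using p by (simp add: unit_simplex_def sum_distrib_right[symmetric])
      also have "\<dots> = payoff N h ps ub" using payG[OF sp, of ub] ps1 ps2 heq by (simp add: algebra_simps)
      finally show ?thesis .
    qed
    show "\<exists>us ps. us \<notin> Ud x \<and> saddle_point N h us ps \<and> non_pure N ps \<and> supported_on N ps {a1, a2}"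
      using ub simp_ps minp maxp np sp unfolding saddle_point_def by blast
  next
    assume "\<exists>us ps. us \<notin> Ud x \<and> saddle_point N h us ps \<and> non_pure N ps \<and> supported_on N ps {a1, a2}"
    then obtain us ps where us: "us \<notin> Ud x" and sad: "saddle_point N h us ps"
      and np: "non_pure N ps" and sp: "supported_on N ps {a1, a2}" by blast
    have pos1: "ps a1 > 0"
    proof (rule ccontr)
      assume "\<not> ps a1 > 0"
      then have "{a\<in>{1..N}. 0 < ps a} \<subseteq> {a2}" using sp by (auto simp: supported_on_def)
      then have "card {a\<in>{1..N}. 0 < ps a} \<le> 1" using card_mono[of "{a2}"] by fastforce
      then show False using np by (simp add: non_pure_def)
    qed
    have pos2: "ps a2 > 0"
    proof (rule ccontr)
      assume "\<not> ps a2 > 0"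
      then have "{a\<in>{1..N}. 0 < ps a} \<subseteq> {a1}" using sp by (auto simp: supported_on_def)
      then have "card {a\<in>{1..N}. 0 < ps a} \<le> 1" using card_mono[of "{a1}"] by fastforce
      then show False using np by (simp add: non_pure_def)
    qed
    have psum: "ps a1 + ps a2 = 1" using sad sumG[OF sp] by (simp add: saddle_point_def unit_simplex_def)
    define e1 where "e1 a = (if a = a1 then 1 else 0::real)" for a
    define e2 where "e2 a = (if a = a2 then 1 else 0::real)" for a
    have e1s: "supported_on N e1 {a1, a2}" by (simp add: supported_on_def e1_def)
    have e2s: "supported_on N e2 {a1, a2}" by (simp add: supported_on_def e2_def)
    have e1u: "e1 \<in> unit_simplex N" unfolding unit_simplex_def using sumG[OF e1s] a12 by (auto simp: e1_def)
    have e2u: "e2 \<in> unit_simplex N" unfolding unit_simplex_def using sumG[OF e2s] a12 by (auto simp: e2_def)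
    have le1: "h a1 us \<le> ps a1 * h a1 us + ps a2 * h a2 us"
      using sad e1u payG[OF e1s, of us] payG[OF sp, of us] a12 by (auto simp: saddle_point_def e1_def)
    have le2: "h a2 us \<le> ps a1 * h a1 us + ps a2 * h a2 us"
      using sad e2u payG[OF e2s, of us] payG[OF sp, of us] a12 by (auto simp: saddle_point_def e2_def)
    have ps1e: "ps a1 = 1 - ps a2" and ps2e: "ps a2 = 1 - ps a1" using psum by auto
    have "ps a2 * (h a1 us - h a2 us) \<le> 0" using le1 unfolding ps1e by (simp add: algebra_simps)
    then have "h a1 us \<le> h a2 us" using pos2 by (simp add: mult_le_0_iff)
    moreover have "ps a1 * (h a2 us - h a1 us) \<le> 0" using le2 unfolding ps2e by (simp add: algebra_simps)
    then have "h a2 us \<le> h a1 us" using pos1 by (simp add: mult_le_0_iff)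
    ultimately have heq: "h a1 us = h a2 us" by simp
    define d1 where "d1 = deriv (h a1) us"
    define d2 where "d2 = deriv (h a2) us"
    have der: "DERIV (\<lambda>v. ps a1 * h a1 v + ps a2 * h a2 v) us :> ps a1 * d1 + ps a2 * d2"
      using hder[OF a1_in us] hder[OF a2_in us] unfolding d1_def d2_def
      by (auto intro!: derivative_eq_intros)
    moreover have mn: "\<forall>v. \<bar>us - v\<bar> < 1 \<longrightarrow> ps a1 * h a1 us + ps a2 * h a2 us \<le> ps a1 * h a1 v + ps a2 * h a2 v"
      using sad payG[OF sp] by (auto simp: saddle_point_def)
    ultimately have z: "ps a1 * d1 + ps a2 * d2 = 0" using DERIV_local_min[OF der _ mn] by simp
    have "d1 * d2 < 0 \<or> (d1 = 0 \<and> d2 = 0)"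
    proof (cases "d1 = 0")
      case True then show ?thesis using z pos2 by simp
    next
      case False
      have "ps a2 * (d1 * d2) = - (ps a1 * (d1 * d1))" using z
        by (metis (no_types, opaque_lifting) add_eq_0_iff mult.commute mult.left_commute mult_minus_right)
      moreover have "ps a1 * (d1 * d1) > 0" using False pos1 by (auto simp add: zero_less_mult_iff)
      ultimately have "ps a2 * (d1 * d2) < 0" by simp
      then show ?thesis using pos2 by (simp add: mult_less_0_iff)
    qed
    then show "\<exists>ub. ub \<notin> Ud x \<and> h a1 ub = h a2 ub \<and>
        (deriv (h a1) ub * deriv (h a2) ub < 0 \<or> deriv (h a1) ub = 0 \<and> deriv (h a2) ub = 0)"
      using us heq unfolding d1_def d2_def by blast
  qed
qed

end
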